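(* If a complete theory $T$ is convexly orderable, then $T$ is dp-small.
   Context: Let $T$ be a complete theory in a language $L$ with monster model $\mathcal{U}$; $\mathcal{U}_y$ denotes the $|y|$-tuples from $\mathcal{U}$, and $x$ denotes a single variable. An $L$-structure $M$ is convexly orderable if there is a linear order $\lhd$ on $M$ (not necessarily definable) such that for every $L$-formula $\varphi(x;y)$ there is $K_\varphi<\omega$ with $\varphi(M;b)$ a union of at most $K_\varphi$ $\lhd$-convex subsets of $M$ for every $b\in M_y$; $T$ is convexly orderable if some (equivalently every) model of $T$ is. A partial type $\pi(x)$ is dp-small if there do not exist $L(\mathcal{U})$-formulas $\varphi_i(x)$ ($i<\omega$), an $L$-formula $\psi(x;y)$ and $b_j\in\mathcal{U}_y$ ($j<\omega$) such that for all $i_0,j_0<\omega$ the type $\pi(x)\cup\{\varphi_{i_0}(x),\psi(x;b_{j_0})\}\cup\{\neg\varphi_i(x): i\ne i_0\}\cup\{\neg\psi(x;b_j): j\neq j_0\}$ is consistent. $T$ is dp-small if $x=x$ is dp-small. *)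

theory Defs
  imports Main
begin

text \<open>A language L is given by arity maps fa (function symbols, constants have arity 0)
  and ra (relation symbols). Equality is a logical symbol. Variables are natural numbers.\<close>

datatype 'f trm = Var nat | Fn 'f "'f trm list"

datatype ('f, 'r) fm =
    Eq "'f trm" "'f trm"
  | Rl 'r "'f trm list"
  | Ng "('f, 'r) fm"
  | Cj "('f, 'r) fm" "('f, 'r) fm"
  | Ex nat "('f, 'r) fm"

fun wf_trm :: "('f \<Rightarrow> nat) \<Rightarrow> 'f trm \<Rightarrow> bool" where
  "wf_trm fa (Var n) = True"
| "wf_trm fa (Fn f ts) = (length ts = fa f \<and> (\<forall>t\<in>set ts. wf_trm fa t))"

fun wf_fm :: "('f \<Rightarrow> nat) \<Rightarrow> ('r \<Rightarrow> nat) \<Rightarrow> ('f, 'r) fm \<Rightarrow> bool" where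
  "wf_fm fa ra (Eq s t) = (wf_trm fa s \<and> wf_trm fa t)"
| "wf_fm fa ra (Rl r ts) = (length ts = ra r \<and> (\<forall>t\<in>set ts. wf_trm fa t))"
| "wf_fm fa ra (Ng p) = wf_fm fa ra p"
| "wf_fm fa ra (Cj p q) = (wf_fm fa ra p \<and> wf_fm fa ra q)"
| "wf_fm fa ra (Ex n p) = wf_fm fa ra p"

fun fv_trm :: "'f trm \<Rightarrow> nat set" where
  "fv_trm (Var n) = {n}"
| "fv_trm (Fn f ts) = (\<Union>t\<in>set ts. fv_trm t)"

fun fv :: "('f, 'r) fm \<Rightarrow> nat set" where
  "fv (Eq s t) = fv_trm s \<union> fv_trm t"
| "fv (Rl r ts) = (\<Union>t\<in>set ts. fv_trm t)"
| "fv (Ng p) = fv p"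
| "fv (Cj p q) = fv p \<union> fv q"
| "fv (Ex n p) = fv p - {n}"

definition sentence :: "('f \<Rightarrow> nat) \<Rightarrow> ('r \<Rightarrow> nat) \<Rightarrow> ('f, 'r) fm \<Rightarrow> bool" where
  "sentence fa ra \<sigma> \<longleftrightarrow> wf_fm fa ra \<sigma> \<and> fv \<sigma> = {}"

record ('a, 'f, 'r) struct =
  dom :: "'a set"
  fint :: "'f \<Rightarrow> 'a list \<Rightarrow> 'a"
  rint :: "'r \<Rightarrow> 'a list \<Rightarrow> bool"

definition is_struct :: "('f \<Rightarrow> nat) \<Rightarrow> ('a, 'f, 'r) struct \<Rightarrow> bool" where
  "is_struct fa M \<longleftrightarrow> dom M \<noteq> {} \<and>
     (\<forall>f as. length as = fa f \<and> set as \<subseteq> dom M \<longrightarrow> fint M f as \<in> dom M)"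

fun eval :: "('a, 'f, 'r) struct \<Rightarrow> (nat \<Rightarrow> 'a) \<Rightarrow> 'f trm \<Rightarrow> 'a" where
  "eval M e (Var n) = e n"
| "eval M e (Fn f ts) = fint M f (map (eval M e) ts)"

fun sat :: "('a, 'f, 'r) struct \<Rightarrow> (nat \<Rightarrow> 'a) \<Rightarrow> ('f, 'r) fm \<Rightarrow> bool" where
  "sat M e (Eq s t) = (eval M e s = eval M e t)"
| "sat M e (Rl r ts) = rint M r (map (eval M e) ts)"
| "sat M e (Ng p) = (\<not> sat M e p)"
| "sat M e (Cj p q) = (sat M e p \<and> sat M e q)"
| "sat M e (Ex n p) = (\<exists>a\<in>dom M. sat M (e(n := a)) p)"

definition models :: "('f \<Rightarrow> nat) \<Rightarrow> ('r \<Rightarrow> nat) \<Rightarrow> ('a, 'f, 'r) struct \<Rightarrow> ('f, 'r) fm set \<Rightarrow> bool" where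
  "models fa ra M T \<longleftrightarrow> is_struct fa M \<and>
     (\<forall>\<sigma>\<in>T. \<forall>e. (\<forall>n. e n \<in> dom M) \<longrightarrow> sat M e \<sigma>)"

text \<open>A complete theory: a set of L-sentences containing, for every L-sentence,
  either it or its negation (i.e. deductively closed and complete, like Th(M)).
  Its consistency is provided by the convex orderability hypothesis (which gives a model).\<close>

definition complete_theory :: "('f \<Rightarrow> nat) \<Rightarrow> ('r \<Rightarrow> nat) \<Rightarrow> ('f, 'r) fm set \<Rightarrow> bool" where
  "complete_theory fa ra T \<longleftrightarrow> (\<forall>\<sigma>\<in>T. sentence fa ra \<sigma>) \<and>
     (\<forall>\<sigma>. sentence fa ra \<sigma> \<longrightarrow> \<sigma> \<in> T \<or> Ng \<sigma> \<in> T)"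

text \<open>Convention: in a formula phi(x;y) with |y| = n, the variable x is Var 0 and
  y = (Var 1, ..., Var n). The assignment sending x to a and y to the tuple bs:\<close>

definition asg :: "'a \<Rightarrow> 'a list \<Rightarrow> nat \<Rightarrow> 'a" where
  "asg a bs k = (if k = 0 then a else if k \<le> length bs then bs ! (k - 1) else a)"

definition defset :: "('a, 'f, 'r) struct \<Rightarrow> ('f, 'r) fm \<Rightarrow> 'a list \<Rightarrow> 'a set" where
  "defset M \<phi> bs = {a \<in> dom M. sat M (asg a bs) \<phi>}"

definition convex_in :: "('a, 'f, 'r) struct \<Rightarrow> ('a \<times> 'a) set \<Rightarrow> 'a set \<Rightarrow> bool" where
  "convex_in M r S \<longleftrightarrow> S \<subseteq> dom M \<and>
     (\<forall>a\<in>S. \<forall>c\<in>S. \<forall>d\<in>dom M. (a, d) \<in> r \<and> (d, c) \<in> r \<longrightarrow> d \<in> S)"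

definition convexly_orderable :: "('f \<Rightarrow> nat) \<Rightarrow> ('r \<Rightarrow> nat) \<Rightarrow> ('a, 'f, 'r) struct \<Rightarrow> bool" where
  "convexly_orderable fa ra M \<longleftrightarrow>
     (\<exists>r. linear_order_on (dom M) r \<and>
       (\<forall>\<phi> n. wf_fm fa ra \<phi> \<and> fv \<phi> \<subseteq> {0..n} \<longrightarrow>
          (\<exists>K::nat. \<forall>bs. length bs = n \<and> set bs \<subseteq> dom M \<longrightarrow>
             (\<exists>C. finite C \<and> card C \<le> K \<and> (\<forall>S\<in>C. convex_in M r S) \<and>
                  \<Union>C = defset M \<phi> bs))))"

definition convexly_orderable_thy ::
  "('f \<Rightarrow> nat) \<Rightarrow> ('r \<Rightarrow> nat) \<Rightarrow> ('f, 'r) fm set \<Rightarrow> 'a itself \<Rightarrow> bool" where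
  "convexly_orderable_thy fa ra T _ \<longleftrightarrow>
     (\<exists>M :: ('a, 'f, 'r) struct. models fa ra M T \<and> convexly_orderable fa ra M)"

text \<open>An L(N)-formula in the single free variable x is a pair (chi, c) with chi an
  L-formula whose free variables are among Var 0 (= x) and Var 1..Var |c| (the parameters c).
  A partial type over N is consistent iff it is finitely satisfiable in N
  (consistency with the elementary diagram of N, by compactness).\<close>

definition finsat :: "('a, 'f, 'r) struct \<Rightarrow> (('f, 'r) fm \<times> 'a list) set \<Rightarrow> bool" where
  "finsat N \<pi> \<longleftrightarrow> (\<forall>F \<subseteq> \<pi>. finite F \<longrightarrow>
     (\<exists>a\<in>dom N. \<forall>(\<chi>, c)\<in>F. sat N (asg a c) \<chi>))"

definition dp_pattern :: "('f \<Rightarrow> nat) \<Rightarrow> ('r \<Rightarrow> nat) \<Rightarrow> ('a, 'f, 'r) struct \<Rightarrow> bool" where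
  "dp_pattern fa ra N \<longleftrightarrow>
     (\<exists>(\<phi>s :: nat \<Rightarrow> ('f, 'r) fm) (cs :: nat \<Rightarrow> 'a list) \<psi> n (bs :: nat \<Rightarrow> 'a list).
        (\<forall>i. wf_fm fa ra (\<phi>s i) \<and> fv (\<phi>s i) \<subseteq> {0..length (cs i)} \<and> set (cs i) \<subseteq> dom N) \<and>
        wf_fm fa ra \<psi> \<and> fv \<psi> \<subseteq> {0..n} \<and>
        (\<forall>j. length (bs j) = n \<and> set (bs j) \<subseteq> dom N) \<and>
        (\<forall>i0 j0. finsat N
            ({(\<phi>s i0, cs i0), (\<psi>, bs j0)}
             \<union> {(Ng (\<phi>s i), cs i) | i. i \<noteq> i0}
             \<union> {(Ng \<psi>, bs j) | j. j \<noteq> j0})))"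

definition dp_small_thy ::
  "('f \<Rightarrow> nat) \<Rightarrow> ('r \<Rightarrow> nat) \<Rightarrow> ('f, 'r) fm set \<Rightarrow> 'b itself \<Rightarrow> bool" where
  "dp_small_thy fa ra T _ \<longleftrightarrow>
     (\<forall>N :: ('b, 'f, 'r) struct. models fa ra N T \<longrightarrow> \<not> dp_pattern fa ra N)"

end

theory Submission
  imports Defs "HOL-Library.Nat_Bijection"
begin

fun ren_trm :: "(nat \<Rightarrow> nat) \<Rightarrow> 'f trm \<Rightarrow> 'f trm" where
  "ren_trm f (Var n) = Var (f n)"
| "ren_trm f (Fn g ts) = Fn g (map (ren_trm f) ts)"

fun ren :: "(nat \<Rightarrow> nat) \<Rightarrow> ('f,'r) fm \<Rightarrow> ('f,'r) fm" where
  "ren f (Eq s t) = Eq (ren_trm f s) (ren_trm f t)"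
| "ren f (Rl r ts) = Rl r (map (ren_trm f) ts)"
| "ren f (Ng p) = Ng (ren f p)"
| "ren f (Cj p q) = Cj (ren f p) (ren f q)"
| "ren f (Ex n p) = Ex (f n) (ren f p)"

lemma eval_ren: "eval M e (ren_trm f t) = eval M (e \<circ> f) t"
  by (induction t) (auto cong: map_cong)

lemma wf_trm_ren: "wf_trm fa (ren_trm f t) = wf_trm fa t"
  by (induction t) auto

lemma fv_trm_ren: "fv_trm (ren_trm f t) = f ` fv_trm t"
  by (induction t) auto

lemma sat_ren: "inj f \<Longrightarrow> sat M e (ren f p) = sat M (e \<circ> f) p"
proof (induction p arbitrary: e)
  case (Ex n p)
  have "\<And>a. e(f n := a) \<circ> f = (e \<circ> f)(n := a)"
    using Ex.prems by (auto simp: fun_eq_iff inj_eq)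
  then have "\<And>a. sat M (e(f n := a)) (ren f p) = sat M ((e \<circ> f)(n := a)) p"
    using Ex.IH[OF Ex.prems] by metis
  then show ?case by (simp only: ren.simps sat.simps)
qed (auto simp: eval_ren comp_def)

lemma wf_ren: "wf_fm fa ra (ren f p) = wf_fm fa ra p"
  by (induction p) (auto simp: wf_trm_ren)

lemma fv_ren: "inj f \<Longrightarrow> fv (ren f p) = f ` fv p"
  by (induction p) (auto simp: fv_trm_ren inj_eq)

lemma eval_cong: "(\<forall>v\<in>fv_trm t. e v = e' v) \<Longrightarrow> eval M e t = eval M e' t"
  by (induction t) (auto cong: map_cong)

lemma sat_cong: "(\<forall>v\<in>fv p. e v = e' v) \<Longrightarrow> sat M e p = sat M e' p"
proof (induction p arbitrary: e e')
  case (Eq s t) then show ?case using eval_cong[of s e e' M] eval_cong[of t e e' M] by simp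
next
  case (Rl r ts)
  have "map (eval M e) ts = map (eval M e') ts"
    using Rl by (auto intro!: map_cong eval_cong)
  then show ?case by (simp only: sat.simps)
next
  case (Ex n p)
  have "\<And>a. sat M (e(n:=a)) p = sat M (e'(n:=a)) p"
    by (rule Ex.IH) (use Ex.prems in auto)
  then show ?case by simp
next
  case (Cj p q)
  then show ?case by (metis UnCI sat.simps(4) fv.simps(4))
qed auto

fun Cjs :: "('f,'r) fm \<Rightarrow> ('f,'r) fm list \<Rightarrow> ('f,'r) fm" where
  "Cjs b [] = b"
| "Cjs b (p # ps) = Cj p (Cjs b ps)"

lemma sat_Cjs: "sat M e (Cjs b ps) = (sat M e b \<and> (\<forall>p\<in>set ps. sat M e p))"
  by (induction ps) auto
lemma wf_Cjs: "wf_fm fa ra (Cjs b ps) = (wf_fm fa ra b \<and> (\<forall>p\<in>set ps. wf_fm fa ra p))"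
  by (induction ps) auto
lemma fv_Cjs: "fv (Cjs b ps) = fv b \<union> (\<Union>p\<in>set ps. fv p)"
  by (induction ps) auto

fun Exs :: "nat list \<Rightarrow> ('f,'r) fm \<Rightarrow> ('f,'r) fm" where
  "Exs [] p = p"
| "Exs (v # vs) p = Ex v (Exs vs p)"

lemma wf_Exs: "wf_fm fa ra (Exs vs p) = wf_fm fa ra p"
  by (induction vs) auto
lemma fv_Exs: "fv (Exs vs p) = fv p - set vs"
  by (induction vs) auto

lemma sat_Exs: "sat M e (Exs vs p) = (\<exists>e'. (\<forall>v. v \<notin> set vs \<longrightarrow> e' v = e v) \<and> (\<forall>v\<in>set vs. e' v \<in> dom M) \<and> sat M e' p)"
proof (induction vs arbitrary: e)
  case Nil
  then show ?case by (auto simp: fun_eq_iff) (metis ext)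
next
  case (Cons w vs)
  show ?case
  proof
    assume "sat M e (Exs (w # vs) p)"
    then obtain a where a: "a \<in> dom M" "sat M (e(w:=a)) (Exs vs p)" by auto
    then obtain e' where "(\<forall>v. v \<notin> set vs \<longrightarrow> e' v = (e(w:=a)) v)" "(\<forall>v\<in>set vs. e' v \<in> dom M)" "sat M e' p"
      using Cons.IH by blast
    then show "\<exists>e'. (\<forall>v. v \<notin> set (w#vs) \<longrightarrow> e' v = e v) \<and> (\<forall>v\<in>set (w#vs). e' v \<in> dom M) \<and> sat M e' p"
      using a by (intro exI[of _ e']) auto
  next
    assume "\<exists>e'. (\<forall>v. v \<notin> set (w#vs) \<longrightarrow> e' v = e v) \<and> (\<forall>v\<in>set (w#vs). e' v \<in> dom M) \<and> sat M e' p"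
    then obtain e' where e': "(\<forall>v. v \<notin> set (w#vs) \<longrightarrow> e' v = e v)" "(\<forall>v\<in>set (w#vs). e' v \<in> dom M)" "sat M e' p"
      by blast
    have "sat M (e(w := e' w)) (Exs vs p)"
      using e' by (subst Cons.IH) (intro exI[of _ e'], auto)
    then show "sat M e (Exs (w # vs) p)" using e' by auto
  qed
qed

lemma key_ren:
  assumes "f 0 = 0" "inj f" "fv p \<subseteq> {0..length c}"
    "\<forall>k. 1 \<le> k \<and> k \<le> length c \<longrightarrow> e (f k) = c ! (k - 1)"
  shows "sat X (e(0:=a)) (ren f p) = sat X (asg a c) p"
proof -
  have "sat X (e(0:=a)) (ren f p) = sat X ((e(0:=a)) \<circ> f) p" using assms sat_ren by blast
  also have "\<dots> = sat X (asg a c) p"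
  proof (rule sat_cong, intro ballI)
    fix v assume v: "v \<in> fv p"
    show "((e(0:=a)) \<circ> f) v = asg a c v"
    proof (cases "v = 0")
      case True then show ?thesis using assms by (simp add: asg_def)
    next
      case False
      then have "f v \<noteq> 0" using assms(1,2) by (metis inj_eq)
      then show ?thesis using assms v False by (auto simp: asg_def)
    qed
  qed
  finally show ?thesis .
qed

lemma column:
  assumes lin: "linear_order_on (dom M) r"
  and A: "\<forall>i<rr. \<Union>(CA i) = A i"
  and B: "finite CB" "card CB \<le> K" "\<forall>S\<in>CB. convex_in M r S" "\<Union>CB = Bj"
  and p: "\<forall>i<rr. p i \<in> A i \<and> p i \<in> Bj \<and> (\<forall>i'<rr. i'\<noteq>i \<longrightarrow> p i \<notin> A i')"
  and rr: "rr = Suc K"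
  shows "\<exists>i<rr. \<exists>P\<in>CA i. \<exists>E\<in>CB. \<exists>v. p i \<in> P \<and> p i \<in> E \<and> v \<in> E \<and> v \<notin> A i \<and> (p i, v) \<in> r"
proof -
  have "\<forall>i. \<exists>E. i < rr \<longrightarrow> E \<in> CB \<and> p i \<in> E" using p B(4) by blast
  then have "\<exists>h. \<forall>i. i < rr \<longrightarrow> h i \<in> CB \<and> p i \<in> h i" by (rule choice)
  then obtain h where h: "\<forall>i. i < rr \<longrightarrow> h i \<in> CB \<and> p i \<in> h i" by blast
  have "\<not> inj_on h {..<rr}"
  proof
    assume "inj_on h {..<rr}"
    then have "card {..<rr} \<le> card CB" using h B(1) by (intro card_inj_on_le) auto
    then show False using B(2) rr by simp
  qed
  then obtain i1 i2 where i: "i1 < rr" "i2 < rr" "i1 \<noteq> i2" "h i1 = h i2"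
    unfolding inj_on_def by auto
  define E where "E = h i1"
  have E: "E \<in> CB" "p i1 \<in> E" "p i2 \<in> E" using h i E_def by auto
  have conv: "E \<subseteq> dom M" using B(3) E(1) unfolding convex_in_def by blast
  have p1: "p i1 \<in> A i1" "p i2 \<notin> A i1" "p i2 \<in> A i2" "p i1 \<notin> A i2" using p i by auto
  have ne: "p i1 \<noteq> p i2" using p1 by auto
  have tot: "total_on (dom M) r" using lin unfolding linear_order_on_def by blast
  have "(p i1, p i2) \<in> r \<or> (p i2, p i1) \<in> r"
    using tot ne conv E unfolding total_on_def by blast
  then show ?thesis
  proof
    assume o: "(p i1, p i2) \<in> r"
    obtain P where P: "P \<in> CA i1" "p i1 \<in> P" using A p1 i by blast
    have "\<exists>P\<in>CA i1. \<exists>E\<in>CB. \<exists>v. p i1 \<in> P \<and> p i1 \<in> E \<and> v \<in> E \<and> v \<notin> A i1 \<and> (p i1, v) \<in> r"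
      using P E o p1 by blast
    then show ?thesis using i(1) by blast
  next
    assume o: "(p i2, p i1) \<in> r"
    obtain P where P: "P \<in> CA i2" "p i2 \<in> P" using A p1 i by blast
    have "\<exists>P\<in>CA i2. \<exists>E\<in>CB. \<exists>v. p i2 \<in> P \<and> p i2 \<in> E \<and> v \<in> E \<and> v \<notin> A i2 \<and> (p i2, v) \<in> r"
      using P E o p1 by blast
    then show ?thesis using i(2) by blast
  qed
qed

lemma comb:
  assumes lin: "linear_order_on (dom M) r"
  and A1: "\<And>i. i<rr \<Longrightarrow> finite (CA i)" and A2: "\<And>i. i<rr \<Longrightarrow> card (CA i) \<le> Kf i"
  and A3: "\<And>i S. i<rr \<Longrightarrow> S\<in>CA i \<Longrightarrow> convex_in M r S" and A4: "\<And>i. i<rr \<Longrightarrow> \<Union>(CA i) = A i"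
  and B1: "\<And>j. j<nn \<Longrightarrow> finite (CB j)" and B2: "\<And>j. j<nn \<Longrightarrow> card (CB j) \<le> K"
  and B3: "\<And>j S. j<nn \<Longrightarrow> S\<in>CB j \<Longrightarrow> convex_in M r S" and B4: "\<And>j. j<nn \<Longrightarrow> \<Union>(CB j) = B j"
  and p1: "\<And>i j. i<rr \<Longrightarrow> j<nn \<Longrightarrow> p i j \<in> A i"
  and p2: "\<And>i j. i<rr \<Longrightarrow> j<nn \<Longrightarrow> p i j \<in> B j"
  and p3: "\<And>i j i'. i<rr \<Longrightarrow> j<nn \<Longrightarrow> i'<rr \<Longrightarrow> i'\<noteq>i \<Longrightarrow> p i j \<notin> A i'"
  and p4: "\<And>i j j'. i<rr \<Longrightarrow> j<nn \<Longrightarrow> j'<nn \<Longrightarrow> j'\<noteq>j \<Longrightarrow> p i j \<notin> B j'"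
  and rr: "rr = Suc K" and nn: "nn = Suc (\<Sum>i<rr. Kf i)"
  shows False
proof -
  have col: "\<exists>i<rr. \<exists>P\<in>CA i. \<exists>E\<in>CB j. \<exists>v. p i j \<in> P \<and> p i j \<in> E \<and> v \<in> E \<and> v \<notin> A i \<and> (p i j, v) \<in> r"
    if j: "j < nn" for j
  proof (rule column[OF lin, of rr CA A "CB j" K "B j" "\<lambda>i. p i j"])
    show "\<forall>i<rr. \<Union> (CA i) = A i" using A4 by blast
    show "finite (CB j)" "card (CB j) \<le> K" "\<forall>S\<in>CB j. convex_in M r S" "\<Union> (CB j) = B j"
      using B1 B2 B3 B4 j by blast+
    show "\<forall>i<rr. p i j \<in> A i \<and> p i j \<in> B j \<and> (\<forall>i'<rr. i' \<noteq> i \<longrightarrow> p i j \<notin> A i')"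
      using p1 p2 p3 j by blast
  qed (rule rr)
  define Q where "Q j i P E v \<longleftrightarrow> i<rr \<and> P\<in>CA i \<and> E\<in>CB j \<and> p i j \<in> P \<and> p i j \<in> E \<and> v\<in>E \<and> v\<notin>A i \<and> (p i j, v)\<in>r" for j i P E v
  have "\<forall>j. \<exists>t. j < nn \<longrightarrow> Q j (fst t) (fst (snd t)) (fst (snd (snd t))) (snd (snd (snd t)))"
  proof
    fix j
    show "\<exists>t. j < nn \<longrightarrow> Q j (fst t) (fst (snd t)) (fst (snd (snd t))) (snd (snd (snd t)))"
    proof (cases "j < nn")
      case True
      then obtain i P E v where "Q j i P E v" using col[OF True] unfolding Q_def by blast
      then show ?thesis by (intro exI[of _ "(i,P,E,v)"]) simp
    qed simp
  qed
  then have "\<exists>T. \<forall>j. j < nn \<longrightarrow> Q j (fst (T j)) (fst (snd (T j))) (fst (snd (snd (T j)))) (snd (snd (snd (T j))))"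
    by (rule choice)
  then obtain T where T: "\<forall>j. j < nn \<longrightarrow> Q j (fst (T j)) (fst (snd (T j))) (fst (snd (snd (T j)))) (snd (snd (snd (T j))))"
    by blast
  define I where "I j = fst (T j)" for j
  define P where "P j = fst (snd (T j))" for j
  define E where "E j = fst (snd (snd (T j)))" for j
  define v where "v j = snd (snd (snd (T j)))" for j
  have Qj: "Q j (I j) (P j) (E j) (v j)" if "j < nn" for j using T that unfolding I_def P_def E_def v_def by blast
  have I: "\<forall>j. j < nn \<longrightarrow> I j < rr" and P: "\<forall>j. j < nn \<longrightarrow> P j \<in> CA (I j)"
    and E: "\<forall>j. j < nn \<longrightarrow> E j \<in> CB j"
    and v: "\<forall>j. j < nn \<longrightarrow> p (I j) j \<in> P j \<and> p (I j) j \<in> E j \<and> v j \<in> E j \<and> v j \<notin> A (I j) \<and> (p (I j) j, v j) \<in> r"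
    using Qj unfolding Q_def by simp_all
  have tot: "total_on (dom M) r" using lin unfolding linear_order_on_def by blast
  have half: "False" if jj: "j < nn" "j' < nn" "j \<noteq> j'" "I j = I j'" "P j = P j'"
      "(p (I j) j, p (I j) j') \<in> r" for j j'
  proof -
    define i where "i = I j"
    define u where "u = p i j"
    define u' where "u' = p i j'"
    have ir: "i < rr" using I jj i_def by blast
    have Pin: "P j \<in> CA i" using P jj i_def by blast
    have Ein: "E j \<in> CB j" using E jj by blast
    have Pc: "convex_in M r (P j)" using A3 Pin ir by blast
    have Ec: "convex_in M r (E j)" using B3 Ein jj by blast
    have vj: "p (I j) j \<in> P j" "p (I j) j \<in> E j" "v j \<in> E j" "v j \<notin> A (I j)" "(p (I j) j, v j) \<in> r"
      using v jj(1) by blast+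
    have vj': "p (I j') j' \<in> P j'" using v jj(2) by blast
    have uP: "u \<in> P j" "u' \<in> P j" using vj vj' jj unfolding u_def u'_def i_def by simp_all
    have PA: "P j \<subseteq> A i" using A4 Pin ir by blast
    have vA: "v j \<notin> A i" using vj unfolding i_def by blast
    have vP: "v j \<notin> P j" using vA PA by blast
    have vD: "v j \<in> dom M" using Ec vj unfolding convex_in_def by blast
    have u'D: "u' \<in> dom M" using Pc uP unfolding convex_in_def by blast
    have uv: "(u, v j) \<in> r" using vj unfolding u_def i_def by blast
    have uu': "(u, u') \<in> r" using jj unfolding u_def u'_def i_def by simp
    have uE: "u \<in> E j" using vj unfolding u_def i_def by blast
    have "(u', v j) \<in> r"
    proof (rule ccontr)
      assume "(u', v j) \<notin> r"
      moreover have "u' \<noteq> v j" using uP vP by auto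
      ultimately have "(v j, u') \<in> r" using tot u'D vD unfolding total_on_def by blast
      then have "v j \<in> P j" using Pc uP uv vD unfolding convex_in_def by blast
      then show False using vP by simp
    qed
    then have "u' \<in> E j" using Ec uu' u'D uE vj unfolding convex_in_def by blast
    then have "u' \<in> B j" using B4 jj Ein by blast
    moreover have "u' \<notin> B j" using p4 jj ir unfolding u'_def by blast
    ultimately show False by simp
  qed
  have inj: "inj_on (\<lambda>j. (I j, P j)) {..<nn}"
  proof (rule inj_onI)
    fix j j' assume jj: "j \<in> {..<nn}" "j' \<in> {..<nn}" "(I j, P j) = (I j', P j')"
    then have j: "j < nn" "j' < nn" "I j = I j'" "P j = P j'" by auto
    show "j = j'"
    proof (rule ccontr)
      assume ne: "j \<noteq> j'"
      define i where "i = I j"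
      have ir: "i < rr" using I j i_def by blast
      have Pin: "P j \<in> CA i" using P j i_def by blast
      have Pc: "convex_in M r (P j)" using A3 Pin ir by blast
      have in1: "p i j \<in> P j" using v j unfolding i_def by blast
      have "p (I j') j' \<in> P j'" using v j(2) by blast
      then have in2: "p i j' \<in> P j" using j unfolding i_def by simp
      have D: "p i j \<in> dom M" "p i j' \<in> dom M"
        using Pc in1 in2 unfolding convex_in_def by blast+
      have "p i j \<in> B j" "p i j' \<notin> B j" using p2 p4 ir j ne by auto
      then have "p i j \<noteq> p i j'" by auto
      then have "(p i j, p i j') \<in> r \<or> (p i j', p i j) \<in> r" using tot D unfolding total_on_def by blast
      then show False
      proof
        assume "(p i j, p i j') \<in> r"
        then show False using half[of j j'] j ne unfolding i_def by blast
      next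
        assume "(p i j', p i j) \<in> r"
        then show False using half[of j' j] j ne unfolding i_def by simp
      qed
    qed
  qed
  have fin: "finite (Sigma {..<rr} CA)" using A1 by auto
  have "card {..<nn} \<le> card (Sigma {..<rr} CA)"
    by (rule card_inj_on_le[OF inj _ fin]) (use I P in auto)
  also have "\<dots> = (\<Sum>i<rr. card (CA i))" using A1 by (simp add: card_SigmaI)
  also have "\<dots> \<le> (\<Sum>i<rr. Kf i)" using A2 by (intro sum_mono) auto
  finally show False using nn by simp
qed

definition Phi :: "(nat \<Rightarrow> nat \<Rightarrow> nat) \<Rightarrow> (nat \<Rightarrow> nat \<Rightarrow> nat) \<Rightarrow> (nat \<Rightarrow> ('f,'r) fm) \<Rightarrow> ('f,'r) fm \<Rightarrow> nat \<Rightarrow> nat \<Rightarrow> nat \<Rightarrow> nat \<Rightarrow> ('f,'r) fm" where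
"Phi F G ps \<psi> rr nn i0 j0 = Ex 0 (Cjs (Cj (ren (F i0) (ps i0)) (ren (G j0) \<psi>))
   (map (\<lambda>i. Ng (ren (F i) (ps i))) (filter (\<lambda>i. i \<noteq> i0) [0..<rr]) @
    map (\<lambda>j. Ng (ren (G j) \<psi>)) (filter (\<lambda>j. j \<noteq> j0) [0..<nn])))"

lemma sat_Phi:
  assumes F: "\<forall>i. F i 0 = 0 \<and> inj (F i)" and G: "\<forall>j. G j 0 = 0 \<and> inj (G j)"
  and fvp: "\<forall>i<rr. fv (ps i) \<subseteq> {0..length (cs i)}" and fvq: "fv \<psi> \<subseteq> {0..n}"
  and bl: "\<forall>j<nn. length (bs j) = n"
  and ec: "\<forall>i<rr. \<forall>k. 1 \<le> k \<and> k \<le> length (cs i) \<longrightarrow> e (F i k) = cs i ! (k-1)"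
  and eb: "\<forall>j<nn. \<forall>k. 1 \<le> k \<and> k \<le> n \<longrightarrow> e (G j k) = bs j ! (k-1)"
  and i0: "i0 < rr" and j0: "j0 < nn"
  shows "sat X e (Phi F G ps \<psi> rr nn i0 j0) \<longleftrightarrow> (\<exists>a\<in>dom X. sat X (asg a (cs i0)) (ps i0) \<and> sat X (asg a (bs j0)) \<psi>
     \<and> (\<forall>i<rr. i\<noteq>i0 \<longrightarrow> \<not> sat X (asg a (cs i)) (ps i)) \<and> (\<forall>j<nn. j\<noteq>j0 \<longrightarrow> \<not> sat X (asg a (bs j)) \<psi>))"
proof -
  have rp: "sat X (e(0:=a)) (ren (F i) (ps i)) = sat X (asg a (cs i)) (ps i)" if "i < rr" for i a
    by (rule key_ren) (use F fvp ec that in auto)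
  have rq: "sat X (e(0:=a)) (ren (G j) \<psi>) = sat X (asg a (bs j)) \<psi>" if "j < nn" for j a
    by (rule key_ren) (use G fvq eb bl that in auto)
  have "sat X e (Phi F G ps \<psi> rr nn i0 j0) \<longleftrightarrow> (\<exists>a\<in>dom X. sat X (e(0:=a)) (ren (F i0) (ps i0)) \<and> sat X (e(0:=a)) (ren (G j0) \<psi>)
     \<and> (\<forall>i<rr. i\<noteq>i0 \<longrightarrow> \<not> sat X (e(0:=a)) (ren (F i) (ps i))) \<and> (\<forall>j<nn. j\<noteq>j0 \<longrightarrow> \<not> sat X (e(0:=a)) (ren (G j) \<psi>)))"
    unfolding Phi_def by (simp add: sat_Cjs ball_Un del: fun_upd_apply) (rule bex_cong[OF refl], blast)
  also have "\<dots> \<longleftrightarrow> (\<exists>a\<in>dom X. sat X (asg a (cs i0)) (ps i0) \<and> sat X (asg a (bs j0)) \<psi>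
     \<and> (\<forall>i<rr. i\<noteq>i0 \<longrightarrow> \<not> sat X (asg a (cs i)) (ps i)) \<and> (\<forall>j<nn. j\<noteq>j0 \<longrightarrow> \<not> sat X (asg a (bs j)) \<psi>))" using i0 j0 by (simp add: rp rq del: fun_upd_apply)
  finally show ?thesis .
qed

lemma Cjs_fv_sub: "fv b \<subseteq> X \<Longrightarrow> (\<And>p. p \<in> set ps \<Longrightarrow> fv p \<subseteq> X) \<Longrightarrow> fv (Cjs b ps) \<subseteq> X"
  by (induction ps) auto
lemma Cjs_wfI: "wf_fm fa ra b \<Longrightarrow> (\<And>p. p \<in> set ps \<Longrightarrow> wf_fm fa ra p) \<Longrightarrow> wf_fm fa ra (Cjs b ps)"
  by (induction ps) auto

lemma Phi_list: "p \<in> set (map (\<lambda>i. Ng (ren (F i) (ps i))) (filter (\<lambda>i. i \<noteq> i0) [0..<rr]) @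
    map (\<lambda>j. Ng (ren (G j) \<psi>)) (filter (\<lambda>j. j \<noteq> j0) [0..<nn])) \<Longrightarrow>
  (\<exists>i<rr. p = Ng (ren (F i) (ps i))) \<or> (\<exists>j<nn. p = Ng (ren (G j) \<psi>))"
  by auto

lemma wf_Phi:
  assumes "\<forall>i<rr. wf_fm fa ra (ps i)" "wf_fm fa ra \<psi>" "i0 < rr"
  shows "wf_fm fa ra (Phi F G ps \<psi> rr nn i0 j0)"
  unfolding Phi_def wf_fm.simps
proof (rule Cjs_wfI)
  show "wf_fm fa ra (Cj (ren (F i0) (ps i0)) (ren (G j0) \<psi>))" using assms by (simp add: wf_ren)
  fix p assume "p \<in> set (map (\<lambda>i. Ng (ren (F i) (ps i))) (filter (\<lambda>i. i \<noteq> i0) [0..<rr]) @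
    map (\<lambda>j. Ng (ren (G j) \<psi>)) (filter (\<lambda>j. j \<noteq> j0) [0..<nn]))"
  from Phi_list[OF this] show "wf_fm fa ra p" using assms by (auto simp: wf_ren)
qed

lemma fv_Phi:
  assumes F: "\<forall>i. F i 0 = 0 \<and> inj (F i)" and G: "\<forall>j. G j 0 = 0 \<and> inj (G j)"
  and fvp: "\<forall>i<rr. fv (ps i) \<subseteq> {0..length (cs i)}" and fvq: "fv \<psi> \<subseteq> {0..n}"
  and i0: "i0 < rr" and j0: "j0 < nn"
  shows "fv (Phi F G ps \<psi> rr nn i0 j0) \<subseteq> (\<Union>i\<in>{0..<rr}. F i ` {1..<Suc (length (cs i))}) \<union> (\<Union>j\<in>{0..<nn}. G j ` {1..<Suc n})"
    (is "_ \<subseteq> ?S")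
proof -
  have a: "fv (ren (F i) (ps i)) \<subseteq> insert 0 ?S" if "i < rr" for i
  proof -
    have "fv (ren (F i) (ps i)) = F i ` fv (ps i)" using F fv_ren by blast
    also have "\<dots> \<subseteq> F i ` {0..length (cs i)}" using fvp that by blast
    also have "\<dots> = F i ` insert 0 {1..<Suc (length (cs i))}"
      by (rule arg_cong[where f="image (F i)"]) auto
    also have "\<dots> \<subseteq> insert 0 ?S" using F that by auto
    finally show ?thesis .
  qed
  have b: "fv (ren (G j) \<psi>) \<subseteq> insert 0 ?S" if "j < nn" for j
  proof -
    have "fv (ren (G j) \<psi>) = G j ` fv \<psi>" using G fv_ren by blast
    also have "\<dots> \<subseteq> G j ` {0..n}" using fvq by blast
    also have "\<dots> = G j ` insert 0 {1..<Suc n}"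
      by (rule arg_cong[where f="image (G j)"]) auto
    also have "\<dots> \<subseteq> insert 0 ?S" using G that by auto
    finally show ?thesis .
  qed
  have "fv (Cjs (Cj (ren (F i0) (ps i0)) (ren (G j0) \<psi>))
   (map (\<lambda>i. Ng (ren (F i) (ps i))) (filter (\<lambda>i. i \<noteq> i0) [0..<rr]) @
    map (\<lambda>j. Ng (ren (G j) \<psi>)) (filter (\<lambda>j. j \<noteq> j0) [0..<nn]))) \<subseteq> insert 0 ?S"
  proof (rule Cjs_fv_sub)
    show "fv (Cj (ren (F i0) (ps i0)) (ren (G j0) \<psi>)) \<subseteq> insert 0 ?S" using a[OF i0] b[OF j0] by simp
    fix p assume "p \<in> set (map (\<lambda>i. Ng (ren (F i) (ps i))) (filter (\<lambda>i. i \<noteq> i0) [0..<rr]) @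
      map (\<lambda>j. Ng (ren (G j) \<psi>)) (filter (\<lambda>j. j \<noteq> j0) [0..<nn]))"
    from Phi_list[OF this] show "fv p \<subseteq> insert 0 ?S"
    proof
      assume "\<exists>i<rr. p = Ng (ren (F i) (ps i))"
      then obtain i where "i < rr" "p = Ng (ren (F i) (ps i))" by blast
      then show ?thesis using a[of i] by (simp only: fv.simps)
    next
      assume "\<exists>j<nn. p = Ng (ren (G j) \<psi>)"
      then obtain j where "j < nn" "p = Ng (ren (G j) \<psi>)" by blast
      then show ?thesis using b[of j] by (simp only: fv.simps)
    qed
  qed
  then show ?thesis unfolding Phi_def fv.simps by blast
qed

definition fr :: "nat \<Rightarrow> nat \<Rightarrow> nat" where
  "fr i k = (if k = 0 then 0 else Suc (2 * prod_encode (i, k)))"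
definition gc :: "nat \<Rightarrow> nat \<Rightarrow> nat" where
  "gc j k = (if k = 0 then 0 else Suc (Suc (2 * prod_encode (j, k))))"

lemma fr_ok: "fr i 0 = 0 \<and> inj (fr i)"
proof
  show "fr i 0 = 0" by (simp add: fr_def)
  show "inj (fr i)"
  proof (rule injI)
    fix x y assume "fr i x = fr i y"
    then show "x = y" unfolding fr_def
      by (auto split: if_splits dest: inj_onD[OF inj_prod_encode[of UNIV]])
  qed
qed

lemma gc_ok: "gc i 0 = 0 \<and> inj (gc i)"
proof
  show "gc i 0 = 0" by (simp add: gc_def)
  show "inj (gc i)"
  proof (rule injI)
    fix x y assume "gc i x = gc i y"
    then show "x = y" unfolding gc_def
      by (auto split: if_splits dest: inj_onD[OF inj_prod_encode[of UNIV]])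
  qed
qed

definition dec :: "'b \<Rightarrow> (nat \<Rightarrow> 'b list) \<Rightarrow> (nat \<Rightarrow> 'b list) \<Rightarrow> nat \<Rightarrow> 'b" where
  "dec d cs bs v = (if odd v then (case prod_decode ((v - 1) div 2) of (i, k) \<Rightarrow>
        if 1 \<le> k \<and> k \<le> length (cs i) then cs i ! (k - 1) else d)
     else (case prod_decode ((v - 2) div 2) of (j, k) \<Rightarrow>
        if 1 \<le> k \<and> k \<le> length (bs j) then bs j ! (k - 1) else d))"

lemma dec_fr: "1 \<le> k \<Longrightarrow> k \<le> length (cs i) \<Longrightarrow> dec d cs bs (fr i k) = cs i ! (k - 1)"
  by (simp add: dec_def fr_def)

lemma dec_gc: "1 \<le> k \<Longrightarrow> k \<le> length (bs j) \<Longrightarrow> dec d cs bs (gc j k) = bs j ! (k - 1)"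
  by (simp add: dec_def gc_def)

lemma nth_dom: "Suc 0 \<le> k \<Longrightarrow> k \<le> length xs \<Longrightarrow> set xs \<subseteq> D \<Longrightarrow> xs ! (k - Suc 0) \<in> D"
  by (metis One_nat_def Suc_le_eq diff_less less_le_trans nth_mem subsetD zero_less_one)

lemma dec_dom: "d \<in> D \<Longrightarrow> \<forall>i. set (cs i) \<subseteq> D \<Longrightarrow> \<forall>j. set (bs j) \<subseteq> D \<Longrightarrow> dec d cs bs v \<in> D"
  unfolding dec_def by (auto split: prod.splits intro!: nth_dom)

theorem proposition1p5:
  fixes fa :: "'f \<Rightarrow> nat" and ra :: "'r \<Rightarrow> nat" and T :: "('f, 'r) fm set"
  assumes "complete_theory fa ra T"
    and "convexly_orderable_thy fa ra T TYPE('a)"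
  shows "dp_small_thy fa ra T TYPE('b)"
  unfolding dp_small_thy_def
proof (intro allI impI notI)
  fix N :: "('b, 'f, 'r) struct"
  assume mN: "models fa ra N T" and pat: "dp_pattern fa ra N"
  obtain \<phi>s :: "nat \<Rightarrow> ('f, 'r) fm" and cs :: "nat \<Rightarrow> 'b list" and \<psi> n and bs :: "nat \<Rightarrow> 'b list" where
    pc: "\<forall>i. wf_fm fa ra (\<phi>s i) \<and> fv (\<phi>s i) \<subseteq> {0..length (cs i)} \<and> set (cs i) \<subseteq> dom N"
    and pw: "wf_fm fa ra \<psi>" and pf: "fv \<psi> \<subseteq> {0..n}"
    and pb: "\<forall>j. length (bs j) = n \<and> set (bs j) \<subseteq> dom N"
    and fs: "\<forall>i0 j0. finsat N
            ({(\<phi>s i0, cs i0), (\<psi>, bs j0)}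
             \<union> {(Ng (\<phi>s i), cs i) | i. i \<noteq> i0}
             \<union> {(Ng \<psi>, bs j) | j. j \<noteq> j0})"
    using pat unfolding dp_pattern_def by blast
  obtain M :: "('a, 'f, 'r) struct" where mM: "models fa ra M T" and co: "convexly_orderable fa ra M"
    using assms(2) unfolding convexly_orderable_thy_def by blast
  obtain r where lin: "linear_order_on (dom M) r" and H: "\<forall>\<phi> n. wf_fm fa ra \<phi> \<and> fv \<phi> \<subseteq> {0..n} \<longrightarrow>
          (\<exists>K::nat. \<forall>bs. length bs = n \<and> set bs \<subseteq> dom M \<longrightarrow>
             (\<exists>C. finite C \<and> card C \<le> K \<and> (\<forall>S\<in>C. convex_in M r S) \<and> \<Union>C = defset M \<phi> bs))"
    using co unfolding convexly_orderable_def by blast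
  have "\<exists>K::nat. \<forall>bs. length bs = n \<and> set bs \<subseteq> dom M \<longrightarrow>
             (\<exists>C. finite C \<and> card C \<le> K \<and> (\<forall>S\<in>C. convex_in M r S) \<and> \<Union>C = defset M \<psi> bs)"
    by (rule H[rule_format]) (use pw pf in simp)
  then obtain K where HK: "\<forall>bs. length bs = n \<and> set bs \<subseteq> dom M \<longrightarrow>
             (\<exists>C. finite C \<and> card C \<le> K \<and> (\<forall>S\<in>C. convex_in M r S) \<and> \<Union>C = defset M \<psi> bs)" ..
  have "\<forall>i. \<exists>K. \<forall>bs. length bs = length (cs i) \<and> set bs \<subseteq> dom M \<longrightarrow>
             (\<exists>C. finite C \<and> card C \<le> K \<and> (\<forall>S\<in>C. convex_in M r S) \<and> \<Union>C = defset M (\<phi>s i) bs)"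
  proof
    fix i show "\<exists>K. \<forall>bs. length bs = length (cs i) \<and> set bs \<subseteq> dom M \<longrightarrow>
             (\<exists>C. finite C \<and> card C \<le> K \<and> (\<forall>S\<in>C. convex_in M r S) \<and> \<Union>C = defset M (\<phi>s i) bs)"
      by (rule H[rule_format]) (use pc in simp)
  qed
  note chKf = this
  from choice[OF chKf] obtain Kf where HKf: "\<forall>i. \<forall>bs. length bs = length (cs i) \<and> set bs \<subseteq> dom M \<longrightarrow>
             (\<exists>C. finite C \<and> card C \<le> Kf i \<and> (\<forall>S\<in>C. convex_in M r S) \<and> \<Union>C = defset M (\<phi>s i) bs)"
    ..
  define rr where "rr = Suc K"
  define nn where "nn = Suc (\<Sum>i<rr. Kf i)"
  define ps where "ps = concat (map (\<lambda>i. map (fr i) [1..<Suc (length (cs i))]) [0..<rr]) @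
                        concat (map (\<lambda>j. map (gc j) [1..<Suc n]) [0..<nn])"
  define body where "body = Cjs (Phi fr gc \<phi>s \<psi> rr nn 0 0) (map (\<lambda>(i,j). Phi fr gc \<phi>s \<psi> rr nn i j) (List.product [0..<rr] [0..<nn]))"
  define \<sigma> where "\<sigma> = Exs ps body"
  have F: "\<forall>i. fr i 0 = 0 \<and> inj (fr i)" using fr_ok by blast
  have G: "\<forall>j. gc j 0 = 0 \<and> inj (gc j)" using gc_ok by blast
  have fvp: "\<forall>i<rr. fv (\<phi>s i) \<subseteq> {0..length (cs i)}" using pc by blast
  have bl: "\<forall>j<nn. length (bs j) = n" using pb by blast
  have rr0: "0 < rr" and nn0: "0 < nn" by (simp_all add: rr_def nn_def)
  have setps: "set ps = (\<Union>i\<in>{0..<rr}. fr i ` {1..<Suc (length (cs i))}) \<union> (\<Union>j\<in>{0..<nn}. gc j ` {1..<Suc n})"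
    unfolding ps_def by (simp only: set_append set_concat set_map set_upt image_image)
  have body_mem: "p \<in> set (map (\<lambda>(i,j). Phi fr gc \<phi>s \<psi> rr nn i j) (List.product [0..<rr] [0..<nn])) \<Longrightarrow>
      \<exists>i<rr. \<exists>j<nn. p = Phi fr gc \<phi>s \<psi> rr nn i j" for p
    by (auto, blast)
  have sent: "sentence fa ra \<sigma>"
  proof -
    have "wf_fm fa ra body" unfolding body_def
    proof (rule Cjs_wfI)
      show "wf_fm fa ra (Phi fr gc \<phi>s \<psi> rr nn 0 0)" using pc pw rr0 by (intro wf_Phi) auto
      fix p assume "p \<in> set (map (\<lambda>(i,j). Phi fr gc \<phi>s \<psi> rr nn i j) (List.product [0..<rr] [0..<nn]))"
      then obtain i j where "i < rr" "p = Phi fr gc \<phi>s \<psi> rr nn i j" using body_mem by blast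
      then show "wf_fm fa ra p" using pc pw by (auto intro: wf_Phi)
    qed
    moreover have "fv body \<subseteq> set ps" unfolding body_def setps
    proof (rule Cjs_fv_sub)
      show "fv (Phi fr gc \<phi>s \<psi> rr nn 0 0) \<subseteq> (\<Union>i\<in>{0..<rr}. fr i ` {1..<Suc (length (cs i))}) \<union> (\<Union>j\<in>{0..<nn}. gc j ` {1..<Suc n})"
        by (rule fv_Phi[OF F G fvp pf rr0 nn0])
      fix p assume "p \<in> set (map (\<lambda>(i,j). Phi fr gc \<phi>s \<psi> rr nn i j) (List.product [0..<rr] [0..<nn]))"
      then obtain i j where ij: "i < rr" "j < nn" "p = Phi fr gc \<phi>s \<psi> rr nn i j" using body_mem by blast
      show "fv p \<subseteq> (\<Union>i\<in>{0..<rr}. fr i ` {1..<Suc (length (cs i))}) \<union> (\<Union>j\<in>{0..<nn}. gc j ` {1..<Suc n})"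
        unfolding ij(3) by (rule fv_Phi[OF F G fvp pf ij(1,2)])
    qed
    ultimately show ?thesis unfolding sentence_def \<sigma>_def by (simp add: wf_Exs fv_Exs)
  qed
  obtain d where d: "d \<in> dom N" using mN unfolding models_def is_struct_def by blast
  define eN where "eN = dec d cs bs"
  have eNd: "eN v \<in> dom N" for v unfolding eN_def by (rule dec_dom) (use d pc pb in auto)
  have ecN: "\<forall>i<rr. \<forall>k. 1 \<le> k \<and> k \<le> length (cs i) \<longrightarrow> eN (fr i k) = cs i ! (k-1)"
    unfolding eN_def by (simp add: dec_fr)
  have ebN: "\<forall>j<nn. \<forall>k. 1 \<le> k \<and> k \<le> n \<longrightarrow> eN (gc j k) = bs j ! (k-1)"
    unfolding eN_def using pb by (simp add: dec_gc)
  have PhiN: "sat N eN (Phi fr gc \<phi>s \<psi> rr nn i0 j0)" if ij: "i0 < rr" "j0 < nn" for i0 j0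
  proof -
    define Fs where "Fs = {(\<phi>s i0, cs i0), (\<psi>, bs j0)} \<union> (\<lambda>i. (Ng (\<phi>s i), cs i)) ` {i. i < rr \<and> i \<noteq> i0}
        \<union> (\<lambda>j. (Ng \<psi>, bs j)) ` {j. j < nn \<and> j \<noteq> j0}"
    have "Fs \<subseteq> {(\<phi>s i0, cs i0), (\<psi>, bs j0)}
             \<union> {(Ng (\<phi>s i), cs i) | i. i \<noteq> i0}
             \<union> {(Ng \<psi>, bs j) | j. j \<noteq> j0}" unfolding Fs_def by blast
    moreover have "finite Fs" unfolding Fs_def by simp
    ultimately obtain a where a: "a \<in> dom N" "\<forall>(\<chi>, c)\<in>Fs. sat N (asg a c) \<chi>"
      using fs unfolding finsat_def by blast
    have a2: "\<And>\<chi> c. (\<chi>, c) \<in> Fs \<Longrightarrow> sat N (asg a c) \<chi>" using a(2) by blast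
    have "sat N (asg a (cs i0)) (\<phi>s i0) \<and> sat N (asg a (bs j0)) \<psi>
     \<and> (\<forall>i<rr. i\<noteq>i0 \<longrightarrow> \<not> sat N (asg a (cs i)) (\<phi>s i)) \<and> (\<forall>j<nn. j\<noteq>j0 \<longrightarrow> \<not> sat N (asg a (bs j)) \<psi>)"
    proof (intro conjI allI impI)
      show "sat N (asg a (cs i0)) (\<phi>s i0)" by (rule a2) (simp add: Fs_def)
      show "sat N (asg a (bs j0)) \<psi>" by (rule a2) (simp add: Fs_def)
      fix i assume "i < rr" "i \<noteq> i0"
      then have "sat N (asg a (cs i)) (Ng (\<phi>s i))" by (intro a2) (simp add: Fs_def)
      then show "\<not> sat N (asg a (cs i)) (\<phi>s i)" by simp
    next
      fix j assume "j < nn" "j \<noteq> j0"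
      then have "sat N (asg a (bs j)) (Ng \<psi>)" by (intro a2) (simp add: Fs_def)
      then show "\<not> sat N (asg a (bs j)) \<psi>" by simp
    qed
    then show ?thesis using a(1)
      by (subst sat_Phi[OF F G fvp pf bl ecN ebN ij]) blast
  qed
  have "sat N eN body" unfolding body_def sat_Cjs
  proof
    show "sat N eN (Phi fr gc \<phi>s \<psi> rr nn 0 0)" using PhiN rr0 nn0 by blast
    show "\<forall>p\<in>set (map (\<lambda>(i,j). Phi fr gc \<phi>s \<psi> rr nn i j) (List.product [0..<rr] [0..<nn])). sat N eN p"
      using PhiN body_mem by blast
  qed
  then have "sat N eN \<sigma>" unfolding \<sigma>_def sat_Exs using eNd by blast
  have "\<sigma> \<in> T"
  proof (rule ccontr)
    assume "\<sigma> \<notin> T"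
    then have "Ng \<sigma> \<in> T" using assms(1) sent unfolding complete_theory_def by blast
    then have "sat N eN (Ng \<sigma>)" using mN eNd unfolding models_def by blast
    then show False using \<open>sat N eN \<sigma>\<close> by simp
  qed
  obtain dM where dM: "dM \<in> dom M" using mM unfolding models_def is_struct_def by blast
  have "\<forall>e. (\<forall>n. e n \<in> dom M) \<longrightarrow> sat M e \<sigma>" using mM \<open>\<sigma> \<in> T\<close> unfolding models_def by blast
  then have "sat M (\<lambda>_. dM) \<sigma>" using dM by simp
  then obtain e where e1: "\<forall>v\<in>set ps. e v \<in> dom M" and e2: "sat M e body"
    unfolding \<sigma>_def sat_Exs by blast
  define c' where "c' i = map (\<lambda>k. e (fr i (Suc k))) [0..<length (cs i)]" for i
  define b' where "b' j = map (\<lambda>k. e (gc j (Suc k))) [0..<n]" for j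
  have c'l: "length (c' i) = length (cs i)" for i by (simp add: c'_def)
  have b'l: "\<forall>j<nn. length (b' j) = n" by (simp add: b'_def)
  have ecM: "\<forall>i<rr. \<forall>k. 1 \<le> k \<and> k \<le> length (c' i) \<longrightarrow> e (fr i k) = c' i ! (k-1)"
    by (auto simp: c'_def)
  have ebM: "\<forall>j<nn. \<forall>k. 1 \<le> k \<and> k \<le> n \<longrightarrow> e (gc j k) = b' j ! (k-1)"
    by (auto simp: b'_def)
  have fvp': "\<forall>i<rr. fv (\<phi>s i) \<subseteq> {0..length (c' i)}" using fvp c'l by simp
  have frps: "fr i k \<in> set ps" if "i < rr" "1 \<le> k" "k \<le> length (cs i)" for i k
  proof -
    have "fr i k \<in> fr i ` {1..<Suc (length (cs i))}" using that by (intro imageI) simp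
    then show ?thesis unfolding setps using that by (intro UnI1 UN_I[of i]) simp_all
  qed
  have gcps: "gc j k \<in> set ps" if "j < nn" "1 \<le> k" "k \<le> n" for j k
  proof -
    have "gc j k \<in> gc j ` {1..<Suc n}" using that by (intro imageI) simp
    then show ?thesis unfolding setps using that by (intro UnI2 UN_I[of j]) simp_all
  qed
  have c'd: "set (c' i) \<subseteq> dom M" if "i < rr" for i
    using e1 frps that unfolding c'_def by auto
  have b'd: "set (b' j) \<subseteq> dom M" if "j < nn" for j
    using e1 gcps that unfolding b'_def by auto
  define Rel where "Rel i j a \<longleftrightarrow> a\<in>dom M \<and> sat M (asg a (c' i)) (\<phi>s i) \<and> sat M (asg a (b' j)) \<psi>
     \<and> (\<forall>i'<rr. i'\<noteq>i \<longrightarrow> \<not> sat M (asg a (c' i')) (\<phi>s i')) \<and> (\<forall>j'<nn. j'\<noteq>j \<longrightarrow> \<not> sat M (asg a (b' j')) \<psi>)" for i j a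
  have exR: "\<exists>a. Rel i j a" if ij: "i < rr" "j < nn" for i j
  proof -
    have "(i,j) \<in> set (List.product [0..<rr] [0..<nn])" using ij by simp
    then have "(\<lambda>(i,j). Phi fr gc \<phi>s \<psi> rr nn i j) (i,j) \<in> set (map (\<lambda>(i,j). Phi fr gc \<phi>s \<psi> rr nn i j) (List.product [0..<rr] [0..<nn]))"
      unfolding set_map by (rule imageI)
    then have mem: "Phi fr gc \<phi>s \<psi> rr nn i j \<in> set (map (\<lambda>(i,j). Phi fr gc \<phi>s \<psi> rr nn i j) (List.product [0..<rr] [0..<nn]))"
      by simp
    have "sat M e (Phi fr gc \<phi>s \<psi> rr nn i j)"
      using e2 mem unfolding body_def sat_Cjs by blast
    then show ?thesis unfolding Rel_def
      by (subst (asm) sat_Phi[OF F G fvp' pf b'l ecM ebM ij]) blast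
  qed
  have "\<forall>x. \<exists>a. fst x < rr \<and> snd x < nn \<longrightarrow> Rel (fst x) (snd x) a"
  proof
    fix x :: "nat \<times> nat"
    show "\<exists>a. fst x < rr \<and> snd x < nn \<longrightarrow> Rel (fst x) (snd x) a"
    proof (cases "fst x < rr \<and> snd x < nn")
      case True
      then obtain a where "Rel (fst x) (snd x) a" using exR[of "fst x" "snd x"] by blast
      then show ?thesis by blast
    next
      case False
      then show ?thesis by blast
    qed
  qed
  note chpp = this
  from choice[OF chpp] obtain pp where pp: "\<forall>x. fst x < rr \<and> snd x < nn \<longrightarrow> Rel (fst x) (snd x) (pp x)"
    ..
  define p where "p i j = pp (i, j)" for i j
  have pR: "Rel i j (p i j)" if "i < rr" "j < nn" for i j
    using pp[rule_format, of "(i,j)"] that unfolding p_def by simp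
  have "\<forall>j. \<exists>C. j < nn \<longrightarrow> finite C \<and> card C \<le> K \<and> (\<forall>S\<in>C. convex_in M r S) \<and> \<Union>C = defset M \<psi> (b' j)"
  proof
    fix j show "\<exists>C. j < nn \<longrightarrow> finite C \<and> card C \<le> K \<and> (\<forall>S\<in>C. convex_in M r S) \<and> \<Union>C = defset M \<psi> (b' j)"
    proof (cases "j < nn")
      case True
      have lb: "length (b' j) = n \<and> set (b' j) \<subseteq> dom M" using True b'l b'd by simp
      obtain C where "finite C \<and> card C \<le> K \<and> (\<forall>S\<in>C. convex_in M r S) \<and> \<Union>C = defset M \<psi> (b' j)"
        using HK[rule_format, OF lb] by (rule exE)
      then show ?thesis by blast
    next
      case False
      then show ?thesis by blast
    qed
  qed
  note chCB = this
  from choice[OF chCB] obtain CB where CB: "\<forall>j. j < nn \<longrightarrow> finite (CB j) \<and> card (CB j) \<le> K \<and> (\<forall>S\<in>CB j. convex_in M r S) \<and> \<Union>(CB j) = defset M \<psi> (b' j)"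
    ..
  have "\<forall>i. \<exists>C. i < rr \<longrightarrow> finite C \<and> card C \<le> Kf i \<and> (\<forall>S\<in>C. convex_in M r S) \<and> \<Union>C = defset M (\<phi>s i) (c' i)"
  proof
    fix i show "\<exists>C. i < rr \<longrightarrow> finite C \<and> card C \<le> Kf i \<and> (\<forall>S\<in>C. convex_in M r S) \<and> \<Union>C = defset M (\<phi>s i) (c' i)"
    proof (cases "i < rr")
      case True
      have lc: "length (c' i) = length (cs i) \<and> set (c' i) \<subseteq> dom M" using True c'l c'd by simp
      obtain C where "finite C \<and> card C \<le> Kf i \<and> (\<forall>S\<in>C. convex_in M r S) \<and> \<Union>C = defset M (\<phi>s i) (c' i)"
        using HKf[rule_format, OF lc] by (rule exE)
      then show ?thesis by blast
    next
      case False
      then show ?thesis by blast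
    qed
  qed
  note chCA = this
  from choice[OF chCA] obtain CA where CA: "\<forall>i. i < rr \<longrightarrow> finite (CA i) \<and> card (CA i) \<le> Kf i \<and> (\<forall>S\<in>CA i. convex_in M r S) \<and> \<Union>(CA i) = defset M (\<phi>s i) (c' i)"
    ..
  show False
  proof (rule comb[OF lin, where CA = CA and Kf = Kf and A = "\<lambda>i. defset M (\<phi>s i) (c' i)"
        and CB = CB and K = K and B = "\<lambda>j. defset M \<psi> (b' j)" and p = p and rr = rr and nn = nn])
    show "\<And>i. i<rr \<Longrightarrow> finite (CA i)" "\<And>i. i<rr \<Longrightarrow> card (CA i) \<le> Kf i"
      "\<And>i S. i<rr \<Longrightarrow> S\<in>CA i \<Longrightarrow> convex_in M r S" "\<And>i. i<rr \<Longrightarrow> \<Union>(CA i) = defset M (\<phi>s i) (c' i)"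
      using CA by blast+
    show "\<And>j. j<nn \<Longrightarrow> finite (CB j)" "\<And>j. j<nn \<Longrightarrow> card (CB j) \<le> K"
      "\<And>j S. j<nn \<Longrightarrow> S\<in>CB j \<Longrightarrow> convex_in M r S" "\<And>j. j<nn \<Longrightarrow> \<Union>(CB j) = defset M \<psi> (b' j)"
      using CB by blast+
    show "\<And>i j. i<rr \<Longrightarrow> j<nn \<Longrightarrow> p i j \<in> defset M (\<phi>s i) (c' i)"
      using pR unfolding Rel_def defset_def by blast
    show "\<And>i j. i<rr \<Longrightarrow> j<nn \<Longrightarrow> p i j \<in> defset M \<psi> (b' j)"
      using pR unfolding Rel_def defset_def by blast
    show "\<And>i j i'. i<rr \<Longrightarrow> j<nn \<Longrightarrow> i'<rr \<Longrightarrow> i'\<noteq>i \<Longrightarrow> p i j \<notin> defset M (\<phi>s i') (c' i')"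
      using pR unfolding Rel_def defset_def by blast
    show "\<And>i j j'. i<rr \<Longrightarrow> j<nn \<Longrightarrow> j'<nn \<Longrightarrow> j'\<noteq>j \<Longrightarrow> p i j \<notin> defset M \<psi> (b' j')"
      using pR unfolding Rel_def defset_def by blast
  qed (simp_all add: rr_def nn_def)
qed

end
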